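(* For the system $$u_{1,0}-u_{0,1}-\frac{\alpha-\beta}{1+u_{0,0}v_{1,1}}\,u_{0,0}=0,\qquad v_{1,0}-v_{0,1}+\frac{\alpha-\beta}{1+u_{0,0}v_{1,1}}\,v_{1,1}=0,$$ the pair $$(\rho,\sigma)=\big(\ln|1+u_{-1,0}v_{1,0}|,\ \ \ln|1+u_{-1,0}v_{0,1}|\big)$$ is a conservation law, i.e. $(\mathcal T-1)\rho=(\mathcal S-1)\sigma$ on solutions.
   Context: Unknowns $u,v$ on $\mathbb Z^2$, $u_{i,j}=u(n+i,m+j)$, similarly $v$; $\alpha\neq\beta$ constants. Shifts $\mathcal S:n\mapsto n+1$, $\mathcal T:m\mapsto m+1$, acting by $\mathcal S^k\mathcal T^\ell(f_{i,j})=f_{i+k,j+\ell}$. A conservation law is a pair $(\rho,\sigma)$ of functions of finitely many shifts of $(u,v)$ with $(\mathcal T-1)\rho=(\mathcal S-1)\sigma$ holding for all solutions of the system (on which all arguments of logarithms and denominators are nonzero). *)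

theory Defs
  imports Complex_Main
begin

type_synonym field2 = "int \<Rightarrow> int \<Rightarrow> real"

definition solves_system :: "real \<Rightarrow> real \<Rightarrow> field2 \<Rightarrow> field2 \<Rightarrow> bool" where
  "solves_system \<alpha> \<beta> u v \<longleftrightarrow> (\<forall>n m.
     u (n+1) m - u n (m+1) - (\<alpha> - \<beta>) / (1 + u n m * v (n+1) (m+1)) * u n m = 0 \<and>
     v (n+1) m - v n (m+1) + (\<alpha> - \<beta>) / (1 + u n m * v (n+1) (m+1)) * v (n+1) (m+1) = 0)"

definition rho :: "field2 \<Rightarrow> field2 \<Rightarrow> int \<Rightarrow> int \<Rightarrow> real" where
  "rho u v n m = ln \<bar>1 + u (n-1) m * v (n+1) m\<bar>"

definition sigma :: "field2 \<Rightarrow> field2 \<Rightarrow> int \<Rightarrow> int \<Rightarrow> real" where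
  "sigma u v n m = ln \<bar>1 + u (n-1) m * v n (m+1)\<bar>"

end

theory Submission
  imports Defs
begin

lemma ln_abs_key:
  fixes A B C E :: real
  assumes "A \<noteq> 0" "B \<noteq> 0" "C \<noteq> 0" "E \<noteq> 0" "A * E = C * B"
  shows "ln \<bar>A\<bar> - ln \<bar>B\<bar> = ln \<bar>C\<bar> - ln \<bar>E\<bar>"
proof -
  have "ln \<bar>A\<bar> + ln \<bar>E\<bar> = ln (\<bar>A\<bar> * \<bar>E\<bar>)" using assms by (simp add: ln_mult)
  also have "\<dots> = ln (\<bar>C\<bar> * \<bar>B\<bar>)" using assms(5) by (metis abs_mult)
  also have "\<dots> = ln \<bar>C\<bar> + ln \<bar>B\<bar>" using assms by (simp add: ln_mult)
  finally show ?thesis by linarith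
qed

theorem mainTheorem7:
  fixes \<alpha> \<beta> :: real and u v :: "int \<Rightarrow> int \<Rightarrow> real"
  assumes "\<alpha> \<noteq> \<beta>"
    and "solves_system \<alpha> \<beta> u v"
    and "\<forall>n m. 1 + u n m * v (n+1) (m+1) \<noteq> 0"
    and "\<forall>n m. 1 + u (n-1) m * v (n+1) m \<noteq> 0"
    and "\<forall>n m. 1 + u (n-1) m * v n (m+1) \<noteq> 0"
  shows "\<forall>n m. rho u v n (m+1) - rho u v n m = sigma u v (n+1) m - sigma u v n m"
proof (intro allI)
  fix n m :: int
  define k where "k = \<alpha> - \<beta>"
  define D where "D = 1 + u n m * v (n+1) (m+1)"
  define D' where "D' = 1 + u (n-1) m * v n (m+1)"
  have D: "D \<noteq> 0" using assms(3) D_def by auto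
  have D': "D' \<noteq> 0" using assms(5) D'_def by auto
  have e1: "u (n-1+1) m - u (n-1) (m+1) - k / (1 + u (n-1) m * v (n-1+1) (m+1)) * u (n-1) m = 0"
    using assms(2) unfolding solves_system_def k_def by blast
  hence u1: "u (n-1) (m+1) = u n m - k * u (n-1) m / D'" using D' unfolding D'_def by simp
  have e2: "v (n+1) m - v n (m+1) + k / (1 + u n m * v (n+1) (m+1)) * v (n+1) (m+1) = 0"
    using assms(2) unfolding solves_system_def k_def by blast
  hence v1: "v (n+1) m = v n (m+1) - k * v (n+1) (m+1) / D" using D unfolding D_def by simp
  have A: "1 + u (n-1) (m+1) * v (n+1) (m+1) \<noteq> 0" using assms(4)[rule_format, of n "m+1"] by simp
  have B: "1 + u (n-1) m * v (n+1) m \<noteq> 0" using assms(4) by auto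
  have key: "(1 + u (n-1) (m+1) * v (n+1) (m+1)) * D' = D * (1 + u (n-1) m * v (n+1) m)"
    unfolding u1 v1 using D D' by (simp add: field_simps D_def D'_def)
  show "rho u v n (m+1) - rho u v n m = sigma u v (n+1) m - sigma u v n m"
    unfolding rho_def sigma_def using ln_abs_key[OF A B D D' key]
    by (simp add: D_def D'_def)
qed

end
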